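(* Let $K\ge 1$ and let $Y,\hat Y\in[K]=\{1,\dots,K\}$, $A\in\{0,1\}$, $D\in\{0,1\}$ be jointly distributed random variables such that $\mathbb{P}(\hat Y=Y\mid D=1)=1$, and let $p_D:=\mathbb{P}(D=1)$. Assume $p^+\in(0,1)$, and that all conditional probabilities below are well-defined (all conditioning events have positive probability; in particular $p_y^+>0$ and $p_y-p_y^+>0$). Then for all $y,\hat y\in[K]$: \[ \Delta\mathrm{s.p.}(\hat y)=\frac{p_D}{p^+(1-p^+)}\Bigl(\varphi^+_{\hat y}(p^+-q^+)-(q_{\hat y}p^+-q^+_{\hat y})\Bigr)+\Delta\mathrm{s.p.}(\hat y\mid D=0)\Bigl(1-p_D\frac{1-q^+}{1-p^+}\Bigr), \] \[ \Delta\mathrm{eq.opp.}(y)=\frac{p_D}{p_y^+(p_y-p_y^+)}\bigl(C^+_{y,y}-1\bigr)(q_yp_y^+-p_yq_y^+)+\Delta\mathrm{eq.opp.}(y\mid D=0)\Bigl(1-p_D\frac{q_y-q_y^+}{p_y-p_y^+}\Bigr), \] \[ \Delta\mathrm{eq.odds}(y,\hat y)=\frac{p_D}{p_y^+(p_y-p_y^+)}\bigl(C^+_{y,\hat y}-\mathbb{1}\{y=\hat y\}\bigr)(q_yp_y^+-p_yq_y^+)+\Delta\mathrm{eq.odds}(y,\hat y\mid D=0)\Bigl(1-p_D\frac{q_y-q_y^+}{p_y-p_y^+}\Bigr). \]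
   Context: Notation: $p^+=\mathbb{P}(A=1)$, $q^+=\mathbb{P}(A=1\mid D=1)$, $p_y=\mathbb{P}(Y=y)$, $q_y=\mathbb{P}(Y=y\mid D=1)$, $p_y^+=\mathbb{P}(Y=y,A=1)$, $q_y^+=\mathbb{P}(Y=y,A=1\mid D=1)$ (so $q^+=\sum_y q_y^+$). Base-classifier quantities: $\varphi_y^{+}=\mathbb{P}(\hat Y=y\mid D=0,A=1)$, $\varphi_y^-=\mathbb{P}(\hat Y=y\mid D=0,A=0)$, $C^+_{y,\hat y}=\mathbb{P}(\hat Y=\hat y\mid D=0,Y=y,A=1)$, $C^-_{y,\hat y}=\mathbb{P}(\hat Y=\hat y\mid D=0,Y=y,A=0)$. Fairness gaps: $\Delta\mathrm{s.p.}(\hat y)=\mathbb{P}(\hat Y=\hat y\mid A=1)-\mathbb{P}(\hat Y=\hat y\mid A=0)$; $\Delta\mathrm{s.p.}(\hat y\mid D=0)=\mathbb{P}(\hat Y=\hat y\mid A=1,D=0)-\mathbb{P}(\hat Y=\hat y\mid A=0,D=0)=\varphi^+_{\hat y}-\varphi^-_{\hat y}$; $\Delta\mathrm{eq.odds}(y,\hat y)=\mathbb{P}(\hat Y=\hat y\mid A=1,Y=y)-\mathbb{P}(\hat Y=\hat y\mid A=0,Y=y)$; $\Delta\mathrm{eq.odds}(y,\hat y\mid D=0)$ is the same with $D=0$ added to both conditionings, equal to $C^+_{y,\hat y}-C^-_{y,\hat y}$; $\Delta\mathrm{eq.opp.}(y)=\Delta\mathrm{eq.odds}(y,y)$ and $\Delta\mathrm{eq.opp.}(y\mid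 D=0)=\Delta\mathrm{eq.odds}(y,y\mid D=0)$. *)

theory Defs
  imports "HOL-Probability.Probability"
begin

text \<open>The joint law of (Y, Yhat, A, D) is modelled on a discrete probability space
  given by a pmf M over an arbitrary outcome type.  A = 1 and D = 1 are the boolean
  values True.\<close>

definition Pr :: "'w pmf \<Rightarrow> ('w \<Rightarrow> bool) \<Rightarrow> real" where
  "Pr M E = measure_pmf.prob M {w. E w}"

definition cPr :: "'w pmf \<Rightarrow> ('w \<Rightarrow> bool) \<Rightarrow> ('w \<Rightarrow> bool) \<Rightarrow> real" where
  "cPr M E F = Pr M (\<lambda>w. E w \<and> F w) / Pr M F"

definition p_plus :: "'w pmf \<Rightarrow> ('w \<Rightarrow> bool) \<Rightarrow> real" where
  "p_plus M A = Pr M A"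

definition q_plus :: "'w pmf \<Rightarrow> ('w \<Rightarrow> bool) \<Rightarrow> ('w \<Rightarrow> bool) \<Rightarrow> real" where
  "q_plus M A D = cPr M A D"

definition p_y :: "'w pmf \<Rightarrow> ('w \<Rightarrow> nat) \<Rightarrow> nat \<Rightarrow> real" where
  "p_y M Y y = Pr M (\<lambda>w. Y w = y)"

definition q_y :: "'w pmf \<Rightarrow> ('w \<Rightarrow> nat) \<Rightarrow> ('w \<Rightarrow> bool) \<Rightarrow> nat \<Rightarrow> real" where
  "q_y M Y D y = cPr M (\<lambda>w. Y w = y) D"

definition p_y_plus :: "'w pmf \<Rightarrow> ('w \<Rightarrow> nat) \<Rightarrow> ('w \<Rightarrow> bool) \<Rightarrow> nat \<Rightarrow> real" where
  "p_y_plus M Y A y = Pr M (\<lambda>w. Y w = y \<and> A w)"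

definition q_y_plus :: "'w pmf \<Rightarrow> ('w \<Rightarrow> nat) \<Rightarrow> ('w \<Rightarrow> bool) \<Rightarrow> ('w \<Rightarrow> bool) \<Rightarrow> nat \<Rightarrow> real" where
  "q_y_plus M Y A D y = cPr M (\<lambda>w. Y w = y \<and> A w) D"

definition phi_plus :: "'w pmf \<Rightarrow> ('w \<Rightarrow> nat) \<Rightarrow> ('w \<Rightarrow> bool) \<Rightarrow> ('w \<Rightarrow> bool) \<Rightarrow> nat \<Rightarrow> real" where
  "phi_plus M Yh A D yh = cPr M (\<lambda>w. Yh w = yh) (\<lambda>w. \<not> D w \<and> A w)"

definition C_plus :: "'w pmf \<Rightarrow> ('w \<Rightarrow> nat) \<Rightarrow> ('w \<Rightarrow> nat) \<Rightarrow> ('w \<Rightarrow> bool) \<Rightarrow> ('w \<Rightarrow> bool)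
    \<Rightarrow> nat \<Rightarrow> nat \<Rightarrow> real" where
  "C_plus M Y Yh A D y yh = cPr M (\<lambda>w. Yh w = yh) (\<lambda>w. \<not> D w \<and> Y w = y \<and> A w)"

definition dsp :: "'w pmf \<Rightarrow> ('w \<Rightarrow> nat) \<Rightarrow> ('w \<Rightarrow> bool) \<Rightarrow> nat \<Rightarrow> real" where
  "dsp M Yh A yh = cPr M (\<lambda>w. Yh w = yh) A - cPr M (\<lambda>w. Yh w = yh) (\<lambda>w. \<not> A w)"

definition dsp0 :: "'w pmf \<Rightarrow> ('w \<Rightarrow> nat) \<Rightarrow> ('w \<Rightarrow> bool) \<Rightarrow> ('w \<Rightarrow> bool) \<Rightarrow> nat \<Rightarrow> real" where
  "dsp0 M Yh A D yh = cPr M (\<lambda>w. Yh w = yh) (\<lambda>w. A w \<and> \<not> D w)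
                    - cPr M (\<lambda>w. Yh w = yh) (\<lambda>w. \<not> A w \<and> \<not> D w)"

definition deqodds :: "'w pmf \<Rightarrow> ('w \<Rightarrow> nat) \<Rightarrow> ('w \<Rightarrow> nat) \<Rightarrow> ('w \<Rightarrow> bool) \<Rightarrow> nat \<Rightarrow> nat \<Rightarrow> real" where
  "deqodds M Y Yh A y yh = cPr M (\<lambda>w. Yh w = yh) (\<lambda>w. A w \<and> Y w = y)
                         - cPr M (\<lambda>w. Yh w = yh) (\<lambda>w. \<not> A w \<and> Y w = y)"

definition deqodds0 :: "'w pmf \<Rightarrow> ('w \<Rightarrow> nat) \<Rightarrow> ('w \<Rightarrow> nat) \<Rightarrow> ('w \<Rightarrow> bool) \<Rightarrow> ('w \<Rightarrow> bool)
    \<Rightarrow> nat \<Rightarrow> nat \<Rightarrow> real" where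
  "deqodds0 M Y Yh A D y yh = cPr M (\<lambda>w. Yh w = yh) (\<lambda>w. A w \<and> Y w = y \<and> \<not> D w)
                            - cPr M (\<lambda>w. Yh w = yh) (\<lambda>w. \<not> A w \<and> Y w = y \<and> \<not> D w)"

definition deqopp :: "'w pmf \<Rightarrow> ('w \<Rightarrow> nat) \<Rightarrow> ('w \<Rightarrow> nat) \<Rightarrow> ('w \<Rightarrow> bool) \<Rightarrow> nat \<Rightarrow> real" where
  "deqopp M Y Yh A y = deqodds M Y Yh A y y"

definition deqopp0 :: "'w pmf \<Rightarrow> ('w \<Rightarrow> nat) \<Rightarrow> ('w \<Rightarrow> nat) \<Rightarrow> ('w \<Rightarrow> bool) \<Rightarrow> ('w \<Rightarrow> bool)
    \<Rightarrow> nat \<Rightarrow> real" where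
  "deqopp0 M Y Yh A D y = deqodds0 M Y Yh A D y y"

end

theory Submission
  imports Defs
begin

lemma Pr_add: assumes "\<And>w. E w \<longleftrightarrow> F w \<or> G w" "\<And>w. \<not>(F w \<and> G w)"
  shows "Pr M E = Pr M F + Pr M G"
proof -
  have "{w. E w} = {w. F w} \<union> {w. G w}" using assms(1) by auto
  moreover have "{w. F w} \<inter> {w. G w} = {}" using assms(2) by auto
  ultimately show ?thesis unfolding Pr_def by (simp add: measure_pmf.finite_measure_Union)
qed
lemma Pr_cong: assumes "\<And>w. E w \<longleftrightarrow> F w" shows "Pr M E = Pr M F"
  using assms by (simp add: Pr_def)
lemma Pr_True: "Pr M (\<lambda>w. True) = 1" by (simp add: Pr_def)
lemma Pr_null: assumes "Pr M N = 0" "\<And>w. \<not> N w \<Longrightarrow> E w \<longleftrightarrow> F w"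
  shows "Pr M E = Pr M F"
proof -
  have a: "Pr M E = Pr M (\<lambda>w. E w \<and> N w) + Pr M (\<lambda>w. E w \<and> \<not> N w)" by (rule Pr_add) auto
  have b: "Pr M F = Pr M (\<lambda>w. F w \<and> N w) + Pr M (\<lambda>w. F w \<and> \<not> N w)" by (rule Pr_add) auto
  have "Pr M (\<lambda>w. E w \<and> N w) \<le> Pr M N" unfolding Pr_def
    by (rule measure_pmf.finite_measure_mono) auto
  moreover have "Pr M (\<lambda>w. F w \<and> N w) \<le> Pr M N" unfolding Pr_def
    by (rule measure_pmf.finite_measure_mono) auto
  moreover have "Pr M (\<lambda>w. E w \<and> \<not> N w) = Pr M (\<lambda>w. F w \<and> \<not> N w)" using assms(2) by (intro Pr_cong) auto
  ultimately show ?thesis using a b assms(1) measure_nonneg[of M] by (simp add: Pr_def) (smt (verit) measure_nonneg)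
qed
lemma alg1:
  fixes x1 n1 x0 n0 a1 a0 m1 m0 :: real
  assumes "m1+n1>0" "m0+n0>0" "n1>0" "n0>0" "m1+m0>0" "m1+n1 < 1" "m1+n1+m0+n0 = 1"
  shows "(a1 + x1)/(m1+n1) - (a0+x0)/(m0+n0) =
   (m1+m0) / ((m1+n1) * (1 - (m1+n1))) * (x1/n1 * ((m1+n1) - m1/(m1+m0)) - ((a1+a0)/(m1+m0) * (m1+n1) - a1/(m1+m0)))
   + (x1/n1 - x0/n0) * (1 - (m1+m0) * ((1 - m1/(m1+m0)) / (1 - (m1+n1))))"
proof -
  have e: "1 - (m1+n1) = m0+n0" using assms by simp
  show ?thesis unfolding e using assms apply (simp add: divide_simps) by algebra
qed
lemma alg2:
  fixes x1 n1 x0 n0 m1 m0 pD i :: real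
  assumes "m1+n1>0" "m0+n0>0" "n1>0" "n0>0" "pD>0"
  shows "(i*m1 + x1)/(m1+n1) - (i*m0+x0)/(m0+n0) =
   pD / ((m1+n1) * ((m1+m0+n1+n0) - (m1+n1))) * (x1/n1 - i) * ((m1+m0)/pD * (m1+n1) - (m1+m0+n1+n0) * (m1/pD))
   + (x1/n1 - x0/n0) * (1 - pD * (((m1+m0)/pD - m1/pD) / ((m1+m0+n1+n0) - (m1+n1))))"
proof -
  have e: "(m1+m0+n1+n0) - (m1+n1) = m0+n0" by simp
  show ?thesis unfolding e using assms apply (simp add: divide_simps) by algebra
qed

lemma sp_part:
  fixes M :: "'w pmf" and Y Yh :: "'w \<Rightarrow> nat" and A D :: "'w \<Rightarrow> bool"
  assumes perfect: "cPr M (\<lambda>w. Yh w = Y w) D = 1"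
    and posD1: "Pr M D > 0"
    and pplus: "0 < p_plus M A" "p_plus M A < 1"
    and posD0A1: "Pr M (\<lambda>w. \<not> D w \<and> A w) > 0"
    and posD0A0: "Pr M (\<lambda>w. \<not> D w \<and> \<not> A w) > 0"
  shows "dsp M Yh A yh
            = Pr M D / (p_plus M A * (1 - p_plus M A)) *
                (phi_plus M Yh A D yh * (p_plus M A - q_plus M A D) - (q_y M Y D yh * p_plus M A - q_y_plus M Y A D yh))
              + dsp0 M Yh A D yh * (1 - Pr M D * ((1 - q_plus M A D) / (1 - p_plus M A)))"
proof -
  define pD where "pD = Pr M D"
  have pDpos: "pD > 0" using posD1 pD_def by simp
  have null: "Pr M (\<lambda>w. D w \<and> Yh w \<noteq> Y w) = 0"
  proof -
    have "Pr M D = Pr M (\<lambda>w. Yh w = Y w \<and> D w) + Pr M (\<lambda>w. D w \<and> Yh w \<noteq> Y w)"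
      by (rule Pr_add) auto
    moreover have "Pr M (\<lambda>w. Yh w = Y w \<and> D w) = Pr M D" using perfect posD1 by (simp add: cPr_def)
    ultimately show ?thesis by simp
  qed
  have tot: "Pr M (\<lambda>w. True) = 1" by (rule Pr_True)
  define x1 where "x1 = Pr M (\<lambda>w. Yh w = yh \<and> \<not> D w \<and> A w)"
  define n1 where "n1 = Pr M (\<lambda>w. \<not> D w \<and> A w)"
  define x0 where "x0 = Pr M (\<lambda>w. Yh w = yh \<and> \<not> A w \<and> \<not> D w)"
  define n0 where "n0 = Pr M (\<lambda>w. \<not> A w \<and> \<not> D w)"
  define a1 where "a1 = Pr M (\<lambda>w. (Y w = yh \<and> A w) \<and> D w)"
  define a0 where "a0 = Pr M (\<lambda>w. Y w = yh \<and> \<not> A w \<and> D w)"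
  define m1 where "m1 = Pr M (\<lambda>w. A w \<and> D w)"
  define m0 where "m0 = Pr M (\<lambda>w. \<not> A w \<and> D w)"
  have "pD = m1 + m0" unfolding pD_def m1_def m0_def by (rule Pr_add) auto
  have "Pr M A = m1 + n1" unfolding n1_def m1_def by (rule Pr_add) auto
  have "Pr M (\<lambda>w. \<not> A w) = m0 + n0" unfolding n0_def m0_def by (rule Pr_add) auto
  have "1 = Pr M A + Pr M (\<lambda>w. \<not> A w)" unfolding tot[symmetric] by (rule Pr_add) auto
  have "Pr M (\<lambda>w. Yh w = yh \<and> A w) = a1 + x1"
  proof -
    have "Pr M (\<lambda>w. Yh w = yh \<and> A w) = Pr M (\<lambda>w. Yh w = yh \<and> A w \<and> D w) + x1"
      unfolding x1_def by (rule Pr_add) auto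
    moreover have "Pr M (\<lambda>w. Yh w = yh \<and> A w \<and> D w) = a1"
      unfolding a1_def by (rule Pr_null[OF null]) auto
    ultimately show ?thesis by simp
  qed
  have "Pr M (\<lambda>w. Yh w = yh \<and> \<not> A w) = a0 + x0"
  proof -
    have "Pr M (\<lambda>w. Yh w = yh \<and> \<not> A w) = Pr M (\<lambda>w. Yh w = yh \<and> \<not> A w \<and> D w) + x0"
      unfolding x0_def by (rule Pr_add) auto
    moreover have "Pr M (\<lambda>w. Yh w = yh \<and> \<not> A w \<and> D w) = a0"
      unfolding a0_def by (rule Pr_null[OF null]) auto
    ultimately show ?thesis by simp
  qed
  have "Pr M (\<lambda>w. Y w = yh \<and> D w) = a1 + a0" unfolding a1_def a0_def by (rule Pr_add) auto
  have "Pr M (\<lambda>w. A w \<and> \<not> D w) = n1" unfolding n1_def by (rule Pr_cong) auto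
  have "Pr M (\<lambda>w. Yh w = yh \<and> A w \<and> \<not> D w) = x1" unfolding x1_def by (rule Pr_cong) auto
  have "Pr M (\<lambda>w. (Yh w = yh \<and> \<not> A w \<and> \<not> D w)) = x0" unfolding x0_def by (rule Pr_cong) auto
  have "n1 > 0" using posD0A1 n1_def by simp
  have "n0 > 0" using posD0A0 n0_def by (simp add: conj_commute)
  have "m1 + n1 > 0" "m1 + n1 < 1" using pplus \<open>Pr M A = m1 + n1\<close> by (auto simp: p_plus_def)
  show ?thesis
    unfolding dsp_def dsp0_def phi_plus_def p_plus_def q_plus_def q_y_def q_y_plus_def cPr_def
    apply (simp only: \<open>Pr M A = m1 + n1\<close> \<open>Pr M (\<lambda>w. \<not> A w) = m0 + n0\<close>
       \<open>Pr M (\<lambda>w. Yh w = yh \<and> A w) = a1 + x1\<close> \<open>Pr M (\<lambda>w. Yh w = yh \<and> \<not> A w) = a0 + x0\<close>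
       \<open>Pr M (\<lambda>w. Y w = yh \<and> D w) = a1 + a0\<close> \<open>Pr M (\<lambda>w. A w \<and> \<not> D w) = n1\<close>
       \<open>Pr M (\<lambda>w. Yh w = yh \<and> A w \<and> \<not> D w) = x1\<close> \<open>Pr M (\<lambda>w. (Yh w = yh \<and> \<not> A w \<and> \<not> D w)) = x0\<close>
       pD_def[symmetric] x1_def[symmetric] n1_def[symmetric] n0_def[symmetric] a1_def[symmetric] m1_def[symmetric] \<open>pD = m1 + m0\<close>)
    apply (rule alg1)
    using \<open>n1 > 0\<close> \<open>n0 > 0\<close> \<open>m1 + n1 > 0\<close> \<open>m1 + n1 < 1\<close> \<open>pD = m1 + m0\<close> pDpos
      \<open>1 = Pr M A + Pr M (\<lambda>w. \<not> A w)\<close> \<open>Pr M A = m1 + n1\<close> \<open>Pr M (\<lambda>w. \<not> A w) = m0 + n0\<close> by auto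
qed

lemma eo_part:
  fixes M :: "'w pmf" and Y Yh :: "'w \<Rightarrow> nat" and A D :: "'w \<Rightarrow> bool"
  assumes perfect: "cPr M (\<lambda>w. Yh w = Y w) D = 1"
    and posD1: "Pr M D > 0"
    and posYA1: "p_y_plus M Y A y > 0"
    and posYA0: "p_y M Y y - p_y_plus M Y A y > 0"
    and posD0YA1: "Pr M (\<lambda>w. \<not> D w \<and> Y w = y \<and> A w) > 0"
    and posD0YA0: "Pr M (\<lambda>w. \<not> D w \<and> Y w = y \<and> \<not> A w) > 0"
  shows "deqodds M Y Yh A y yh
            = Pr M D / (p_y_plus M Y A y * (p_y M Y y - p_y_plus M Y A y)) * (C_plus M Y Yh A D y yh - (if y = yh then 1 else 0))
                * (q_y M Y D y * p_y_plus M Y A y - p_y M Y y * q_y_plus M Y A D y)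
              + deqodds0 M Y Yh A D y yh * (1 - Pr M D * ((q_y M Y D y - q_y_plus M Y A D y) / (p_y M Y y - p_y_plus M Y A y)))"
proof -
  define pD where "pD = Pr M D"
  have pDpos: "pD > 0" using posD1 pD_def by simp
  have null: "Pr M (\<lambda>w. D w \<and> Yh w \<noteq> Y w) = 0"
  proof -
    have "Pr M D = Pr M (\<lambda>w. Yh w = Y w \<and> D w) + Pr M (\<lambda>w. D w \<and> Yh w \<noteq> Y w)"
      by (rule Pr_add) auto
    moreover have "Pr M (\<lambda>w. Yh w = Y w \<and> D w) = Pr M D" using perfect posD1 by (simp add: cPr_def)
    ultimately show ?thesis by simp
  qed
  have tot: "Pr M (\<lambda>w. True) = 1" by (rule Pr_True)
  define u1 where "u1 = Pr M (\<lambda>w. Yh w = yh \<and> \<not> D w \<and> Y w = y \<and> A w)"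
  define v1 where "v1 = Pr M (\<lambda>w. \<not> D w \<and> Y w = y \<and> A w)"
  define u0 where "u0 = Pr M (\<lambda>w. Yh w = yh \<and> \<not> A w \<and> Y w = y \<and> \<not> D w)"
  define v0 where "v0 = Pr M (\<lambda>w. \<not> A w \<and> Y w = y \<and> \<not> D w)"
  define k1 where "k1 = Pr M (\<lambda>w. (Y w = y \<and> A w) \<and> D w)"
  define k0 where "k0 = Pr M (\<lambda>w. Y w = y \<and> \<not> A w \<and> D w)"
  define ii :: real where "ii = (if y = yh then 1 else 0)"
  have "Pr M (\<lambda>w. Y w = y \<and> A w) = k1 + v1" unfolding k1_def v1_def by (rule Pr_add) auto
  have "Pr M (\<lambda>w. Y w = y) = k1 + k0 + v1 + v0"
  proof -
    have "Pr M (\<lambda>w. Y w = y) = Pr M (\<lambda>w. Y w = y \<and> A w) + Pr M (\<lambda>w. Y w = y \<and> \<not> A w)"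
      by (rule Pr_add) auto
    moreover have "Pr M (\<lambda>w. Y w = y \<and> \<not> A w) = k0 + v0" unfolding k0_def v0_def by (rule Pr_add) auto
    ultimately show ?thesis using \<open>Pr M (\<lambda>w. Y w = y \<and> A w) = k1 + v1\<close> by simp
  qed
  have "Pr M (\<lambda>w. Y w = y \<and> D w) = k1 + k0" unfolding k1_def k0_def by (rule Pr_add) auto
  have "Pr M (\<lambda>w. Yh w = yh \<and> A w \<and> Y w = y) = ii * k1 + u1"
  proof -
    have "Pr M (\<lambda>w. Yh w = yh \<and> A w \<and> Y w = y) = Pr M (\<lambda>w. Yh w = yh \<and> A w \<and> Y w = y \<and> D w) + u1"
      unfolding u1_def by (rule Pr_add) auto
    moreover have "Pr M (\<lambda>w. Yh w = yh \<and> A w \<and> Y w = y \<and> D w) = ii * k1"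
    proof (cases "y = yh")
      case True
      then show ?thesis unfolding ii_def k1_def by simp (rule Pr_null[OF null], auto)
    next
      case False
      have "Pr M (\<lambda>w. Yh w = yh \<and> A w \<and> Y w = y \<and> D w) = Pr M (\<lambda>w. False)"
        using False by (intro Pr_null[OF null]) auto
      then show ?thesis unfolding ii_def using False by (simp add: Pr_def)
    qed
    ultimately show ?thesis by simp
  qed
  have "Pr M (\<lambda>w. Yh w = yh \<and> \<not> A w \<and> Y w = y) = ii * k0 + u0"
  proof -
    have "Pr M (\<lambda>w. Yh w = yh \<and> \<not> A w \<and> Y w = y) = Pr M (\<lambda>w. Yh w = yh \<and> \<not> A w \<and> Y w = y \<and> D w) + u0"
      unfolding u0_def by (rule Pr_add) auto
    moreover have "Pr M (\<lambda>w. Yh w = yh \<and> \<not> A w \<and> Y w = y \<and> D w) = ii * k0"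
    proof (cases "y = yh")
      case True
      then show ?thesis unfolding ii_def k0_def by simp (rule Pr_null[OF null], auto)
    next
      case False
      have "Pr M (\<lambda>w. Yh w = yh \<and> \<not> A w \<and> Y w = y \<and> D w) = Pr M (\<lambda>w. False)"
        using False by (intro Pr_null[OF null]) auto
      then show ?thesis unfolding ii_def using False by (simp add: Pr_def)
    qed
    ultimately show ?thesis by simp
  qed
  have "Pr M (\<lambda>w. A w \<and> Y w = y \<and> \<not> D w) = v1" unfolding v1_def by (rule Pr_cong) auto
  have "Pr M (\<lambda>w. Yh w = yh \<and> A w \<and> Y w = y \<and> \<not> D w) = u1" unfolding u1_def by (rule Pr_cong) auto
  have "Pr M (\<lambda>w. A w \<and> Y w = y) = k1 + v1" unfolding k1_def v1_def by (rule Pr_add) auto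
  have "Pr M (\<lambda>w. \<not> A w \<and> Y w = y) = k0 + v0" unfolding k0_def v0_def by (rule Pr_add) auto
  have "v1 > 0" using posD0YA1 v1_def by simp
  have "v0 > 0" using posD0YA0 v0_def by (simp add: conj_commute conj_left_commute)
  have "k1 + v1 > 0" using posYA1 \<open>Pr M (\<lambda>w. Y w = y \<and> A w) = k1 + v1\<close> by (simp add: p_y_plus_def)
  have "k0 + v0 > 0" using posYA0 \<open>Pr M (\<lambda>w. Y w = y \<and> A w) = k1 + v1\<close>
      \<open>Pr M (\<lambda>w. Y w = y) = k1 + k0 + v1 + v0\<close> by (simp add: p_y_plus_def p_y_def)
  show ?thesis
    unfolding deqodds_def deqodds0_def C_plus_def p_y_def p_y_plus_def q_y_def q_y_plus_def cPr_def ii_def[symmetric]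
    apply (simp only: ii_def[symmetric]
       \<open>Pr M (\<lambda>w. Y w = y \<and> A w) = k1 + v1\<close> \<open>Pr M (\<lambda>w. Y w = y) = k1 + k0 + v1 + v0\<close>
       \<open>Pr M (\<lambda>w. Y w = y \<and> D w) = k1 + k0\<close>
       \<open>Pr M (\<lambda>w. Yh w = yh \<and> A w \<and> Y w = y) = ii * k1 + u1\<close>
       \<open>Pr M (\<lambda>w. Yh w = yh \<and> \<not> A w \<and> Y w = y) = ii * k0 + u0\<close>
       \<open>Pr M (\<lambda>w. A w \<and> Y w = y \<and> \<not> D w) = v1\<close>
       \<open>Pr M (\<lambda>w. Yh w = yh \<and> A w \<and> Y w = y \<and> \<not> D w) = u1\<close>
       \<open>Pr M (\<lambda>w. \<not> A w \<and> Y w = y) = k0 + v0\<close> \<open>Pr M (\<lambda>w. A w \<and> Y w = y) = k1 + v1\<close>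
       pD_def[symmetric] u1_def[symmetric] v1_def[symmetric] u0_def[symmetric] v0_def[symmetric] k1_def[symmetric])
    apply (rule alg2)
    using \<open>v1 > 0\<close> \<open>v0 > 0\<close> \<open>k1 + v1 > 0\<close> \<open>k0 + v0 > 0\<close> pDpos by auto
qed

theorem theorem8:
  fixes M :: "'w pmf" and K :: nat
    and Y Yh :: "'w \<Rightarrow> nat" and A D :: "'w \<Rightarrow> bool"
  assumes K: "K \<ge> 1"
    and rangeY: "\<And>w. Y w \<in> {1..K}"
    and rangeYh: "\<And>w. Yh w \<in> {1..K}"
    and perfect: "cPr M (\<lambda>w. Yh w = Y w) D = 1"
    and pplus: "0 < p_plus M A" "p_plus M A < 1"
    and posD1: "Pr M D > 0"
    and posD0A1: "Pr M (\<lambda>w. \<not> D w \<and> A w) > 0"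
    and posD0A0: "Pr M (\<lambda>w. \<not> D w \<and> \<not> A w) > 0"
    and posYA1: "\<And>y. y \<in> {1..K} \<Longrightarrow> p_y_plus M Y A y > 0"
    and posYA0: "\<And>y. y \<in> {1..K} \<Longrightarrow> p_y M Y y - p_y_plus M Y A y > 0"
    and posD0YA1: "\<And>y. y \<in> {1..K} \<Longrightarrow> Pr M (\<lambda>w. \<not> D w \<and> Y w = y \<and> A w) > 0"
    and posD0YA0: "\<And>y. y \<in> {1..K} \<Longrightarrow> Pr M (\<lambda>w. \<not> D w \<and> Y w = y \<and> \<not> A w) > 0"
  shows "\<forall>y \<in> {1..K}. \<forall>yh \<in> {1..K}.
      (let pD = Pr M D; pp = p_plus M A; qp = q_plus M A D;
           py = p_y M Y y; qy = q_y M Y D y;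
           pyp = p_y_plus M Y A y; qyp = q_y_plus M Y A D y
       in dsp M Yh A yh
            = pD / (pp * (1 - pp)) *
                (phi_plus M Yh A D yh * (pp - qp) - (q_y M Y D yh * pp - q_y_plus M Y A D yh))
              + dsp0 M Yh A D yh * (1 - pD * ((1 - qp) / (1 - pp)))
        \<and> deqopp M Y Yh A y
            = pD / (pyp * (py - pyp)) * (C_plus M Y Yh A D y y - 1) * (qy * pyp - py * qyp)
              + deqopp0 M Y Yh A D y * (1 - pD * ((qy - qyp) / (py - pyp)))
        \<and> deqodds M Y Yh A y yh
            = pD / (pyp * (py - pyp)) * (C_plus M Y Yh A D y yh - (if y = yh then 1 else 0))
                * (qy * pyp - py * qyp)
              + deqodds0 M Y Yh A D y yh * (1 - pD * ((qy - qyp) / (py - pyp))))"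
proof (intro ballI)
  fix y yh assume y: "y \<in> {1..K}" and yh: "yh \<in> {1..K}"
  note sp = sp_part[where yh=yh, OF perfect posD1 pplus posD0A1 posD0A0]
  note eo = eo_part[OF perfect posD1 posYA1[OF y] posYA0[OF y] posD0YA1[OF y] posD0YA0[OF y]]
  show "(let pD = Pr M D; pp = p_plus M A; qp = q_plus M A D;
           py = p_y M Y y; qy = q_y M Y D y;
           pyp = p_y_plus M Y A y; qyp = q_y_plus M Y A D y
       in dsp M Yh A yh
            = pD / (pp * (1 - pp)) *
                (phi_plus M Yh A D yh * (pp - qp) - (q_y M Y D yh * pp - q_y_plus M Y A D yh))
              + dsp0 M Yh A D yh * (1 - pD * ((1 - qp) / (1 - pp)))
        \<and> deqopp M Y Yh A y
            = pD / (pyp * (py - pyp)) * (C_plus M Y Yh A D y y - 1) * (qy * pyp - py * qyp)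
              + deqopp0 M Y Yh A D y * (1 - pD * ((qy - qyp) / (py - pyp)))
        \<and> deqodds M Y Yh A y yh
            = pD / (pyp * (py - pyp)) * (C_plus M Y Yh A D y yh - (if y = yh then 1 else 0))
                * (qy * pyp - py * qyp)
              + deqodds0 M Y Yh A D y yh * (1 - pD * ((qy - qyp) / (py - pyp))))"
    using sp eo[where yh=yh] eo[where yh=y] by (simp add: Let_def deqopp_def deqopp0_def)
qed

end
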